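(* For every graph $G$ with $n$ vertices and $m$ edges, \[ 2\sum_{uv\in E(G)} d(u)d(v)\geq 4m^2+\sum_{u\in V(G)}\bigl(d^3(u)-n\,d^2(u)\bigr). \]
   Context: All graphs are finite, simple and undirected. $d(u)$ is the degree of vertex $u$; the sum over $uv\in E(G)$ runs over each edge once. *)

theory Defs
  imports Main
begin

definition simple_graph :: "'a set \<Rightarrow> 'a set set \<Rightarrow> bool" where
  "simple_graph V E \<longleftrightarrow> finite V \<and> (\<forall>e\<in>E. e \<subseteq> V \<and> card e = 2)"

definition degree :: "'a set set \<Rightarrow> 'a \<Rightarrow> nat" where
  "degree E u = card {e\<in>E. u \<in> e}"

end

theory Submission
  imports Defs
begin

lemma swap_count:
  fixes f :: "'a \<Rightarrow> int"
  assumes "simple_graph V E"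
  shows "(\<Sum>e\<in>E. \<Sum>u\<in>e. f u) = (\<Sum>u\<in>V. f u * int (degree E u))"
proof -
  have fV: "finite V" using assms by (simp add: simple_graph_def)
  have sub: "\<And>e. e \<in> E \<Longrightarrow> e \<subseteq> V" using assms by (simp add: simple_graph_def)
  have fE: "finite E" using fV sub by (meson Pow_iff finite_Pow_iff finite_subset subsetI)
  have fe: "\<And>e. e \<in> E \<Longrightarrow> finite e" using sub fV finite_subset by blast
  have "(\<Sum>e\<in>E. \<Sum>u\<in>e. f u) = (\<Sum>e\<in>E. \<Sum>u\<in>V. if u \<in> e then f u else 0)"
  proof (rule sum.cong[OF refl])
    fix e assume "e \<in> E"
    then have "e \<subseteq> V" by (rule sub)
    then show "(\<Sum>u\<in>e. f u) = (\<Sum>u\<in>V. if u \<in> e then f u else 0)"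
      using fV by (simp add: sum.If_cases Int_absorb1 inf.absorb2)
  qed
  also have "\<dots> = (\<Sum>u\<in>V. \<Sum>e\<in>E. if u \<in> e then f u else 0)" by (rule sum.swap)
  also have "\<dots> = (\<Sum>u\<in>V. f u * int (degree E u))"
  proof (rule sum.cong[OF refl])
    fix u
    have "(\<Sum>e\<in>E. if u \<in> e then f u else 0) = (\<Sum>e\<in>{e\<in>E. u \<in> e}. f u)"
      using fE by (rule sum.inter_filter[symmetric])
    then show "(\<Sum>e\<in>E. if u \<in> e then f u else 0) = f u * int (degree E u)"
      by (simp add: degree_def)
  qed
  finally show ?thesis .
qed

lemma edge_id:
  fixes x :: "'a \<Rightarrow> int"
  assumes "card e = 2"
  shows "4 * (\<Prod>u\<in>e. x u) = 2 * (\<Sum>u\<in>e. x u ^ 2) - (\<Sum>p\<in>e \<times> e. (x (fst p) - x (snd p))^2)"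
proof -
  obtain a b where e: "e = {a,b}" "a \<noteq> b" using assms by (meson card_2_iff)
  have "e \<times> e = {(a,a),(a,b),(b,a),(b,b)}" using e by auto
  then show ?thesis using e by (simp add: power2_eq_square algebra_simps)
qed

lemma pair_bound:
  fixes f :: "'a \<times> 'a \<Rightarrow> int"
  assumes "simple_graph V E" and nn: "\<And>p. f p \<ge> 0" and diag: "\<And>a. f (a,a) = 0"
  shows "(\<Sum>e\<in>E. \<Sum>p\<in>e \<times> e. f p) \<le> (\<Sum>p\<in>V \<times> V. f p)"
proof -
  have fV: "finite V" using assms by (simp add: simple_graph_def)
  have sub: "\<And>e. e \<in> E \<Longrightarrow> e \<subseteq> V" using assms by (simp add: simple_graph_def)
  have c2: "\<And>e. e \<in> E \<Longrightarrow> card e = 2" using assms by (simp add: simple_graph_def)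
  have fE: "finite E" using fV sub by (meson Pow_iff finite_Pow_iff finite_subset subsetI)
  have fVV: "finite (V \<times> V)" using fV by simp
  have "(\<Sum>e\<in>E. \<Sum>p\<in>e \<times> e. f p) = (\<Sum>e\<in>E. \<Sum>p\<in>V \<times> V. if p \<in> e \<times> e then f p else 0)"
  proof (rule sum.cong[OF refl])
    fix e assume "e \<in> E"
    then have "e \<times> e \<subseteq> V \<times> V" using sub by blast
    then show "(\<Sum>p\<in>e \<times> e. f p) = (\<Sum>p\<in>V \<times> V. if p \<in> e \<times> e then f p else 0)"
      using fVV by (simp add: sum.If_cases inf.absorb2)
  qed
  also have "\<dots> = (\<Sum>p\<in>V \<times> V. \<Sum>e\<in>E. if p \<in> e \<times> e then f p else 0)" by (rule sum.swap)
  also have "\<dots> \<le> (\<Sum>p\<in>V \<times> V. f p)"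
  proof (rule sum_mono)
    fix p assume "p \<in> V \<times> V"
    obtain a b where p: "p = (a,b)" by force
    have eq: "(\<Sum>e\<in>E. if p \<in> e \<times> e then f p else 0) = (\<Sum>e\<in>{e\<in>E. a \<in> e \<and> b \<in> e}. f p)"
      unfolding p mem_Sigma_iff fst_conv snd_conv by (rule sum.inter_filter[OF fE, symmetric])
    show "(\<Sum>e\<in>E. if p \<in> e \<times> e then f p else 0) \<le> f p"
    proof (cases "a = b")
      case True
      then show ?thesis using eq p diag by simp
    next
      case False
      have "{e\<in>E. a \<in> e \<and> b \<in> e} \<subseteq> {{a,b}}"
      proof
        fix e assume "e \<in> {e\<in>E. a \<in> e \<and> b \<in> e}"
        then have "e \<in> E" "a \<in> e" "b \<in> e" by auto
        moreover have "card e = 2" using c2 \<open>e \<in> E\<close> by blast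
        moreover obtain c d where "e = {c,d}" "c \<noteq> d"
          using \<open>card e = 2\<close> by (meson card_2_iff)
        ultimately have "e = {a,b}" using False by auto
        then show "e \<in> {{a,b}}" by simp
      qed
      then have "card {e\<in>E. a \<in> e \<and> b \<in> e} \<le> 1"
        using card_mono[of "{{a,b}}" "{e\<in>E. a \<in> e \<and> b \<in> e}"] by simp
      then have "int (card {e\<in>E. a \<in> e \<and> b \<in> e}) * f p \<le> 1 * f p"
        using nn by (intro mult_right_mono) auto
      then show ?thesis using eq by simp
    qed
  qed
  finally show ?thesis .
qed

lemma sq_sum:
  fixes x :: "'a \<Rightarrow> int"
  assumes "finite V"
  shows "(\<Sum>p\<in>V \<times> V. (x (fst p) - x (snd p))^2)
     = 2 * (int (card V) * (\<Sum>u\<in>V. x u ^ 2)) - 2 * (\<Sum>u\<in>V. x u)^2"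
proof -
  have "(\<Sum>p\<in>V \<times> V. (x (fst p) - x (snd p))^2)
      = (\<Sum>a\<in>V. \<Sum>b\<in>V. (x a - x b)^2)"
    by (subst sum.cartesian_product) (simp add: split_def)
  also have "\<dots> = (\<Sum>a\<in>V. \<Sum>b\<in>V. x a ^ 2 + x b ^ 2 - 2 * x a * x b)"
    by (simp add: power2_diff)
  also have "\<dots> = (\<Sum>a\<in>V. int (card V) * x a ^ 2 + (\<Sum>b\<in>V. x b ^ 2) - 2 * x a * (\<Sum>b\<in>V. x b))"
    by (simp add: sum.distrib sum_subtractf sum_distrib_left)
  also have "\<dots> = int (card V) * (\<Sum>u\<in>V. x u ^ 2) + int (card V) * (\<Sum>u\<in>V. x u ^ 2) - 2 * (\<Sum>u\<in>V. x u) * (\<Sum>u\<in>V. x u)"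
  proof -
    have h: "(\<Sum>a\<in>V. 2 * x a * (\<Sum>b\<in>V. x b)) = 2 * (\<Sum>u\<in>V. x u) * (\<Sum>u\<in>V. x u)"
      by (metis (no_types) sum_distrib_right sum_distrib_left mult.assoc)
    show ?thesis by (simp add: sum.distrib sum_subtractf sum_distrib_left[symmetric] h)
  qed
  also have "\<dots> = 2 * (int (card V) * (\<Sum>u\<in>V. x u ^ 2)) - 2 * (\<Sum>u\<in>V. x u)^2"
    by (simp add: power2_eq_square)
  finally show ?thesis .
qed

theorem proposition2:
  fixes V :: "'a set" and E :: "'a set set"
  assumes "simple_graph V E"
  shows "2 * (\<Sum>e\<in>E. \<Prod>u\<in>e. int (degree E u))
         \<ge> 4 * int (card E) ^ 2
           + (\<Sum>u\<in>V. int (degree E u) ^ 3 - int (card V) * int (degree E u) ^ 2)"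
proof -
  define x where "x u = int (degree E u)" for u
  have fV: "finite V" using assms by (simp add: simple_graph_def)
  have c2: "\<And>e. e \<in> E \<Longrightarrow> card e = 2" using assms by (simp add: simple_graph_def)
  define S where "S = (\<Sum>e\<in>E. \<Prod>u\<in>e. x u)"
  define T where "T = (\<Sum>e\<in>E. \<Sum>p\<in>e \<times> e. (x (fst p) - x (snd p))^2)"
  have "4 * S = (\<Sum>e\<in>E. 4 * (\<Prod>u\<in>e. x u))"
    unfolding S_def by (simp add: sum_distrib_left)
  also have "\<dots> = (\<Sum>e\<in>E. 2 * (\<Sum>u\<in>e. x u ^ 2) - (\<Sum>p\<in>e \<times> e. (x (fst p) - x (snd p))^2))"
    using c2 edge_id by (intro sum.cong) auto
  also have "\<dots> = 2 * (\<Sum>e\<in>E. \<Sum>u\<in>e. x u ^ 2) - T"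
    unfolding T_def by (simp add: sum_subtractf sum_distrib_left)
  also have "(\<Sum>e\<in>E. \<Sum>u\<in>e. x u ^ 2) = (\<Sum>u\<in>V. x u ^ 3)"
    using swap_count[OF assms, of "\<lambda>u. x u ^ 2"] by (simp add: x_def power3_eq_cube power2_eq_square)
  finally have S: "4 * S = 2 * (\<Sum>u\<in>V. x u ^ 3) - T" .
  have "T \<le> (\<Sum>p\<in>V \<times> V. (x (fst p) - x (snd p))^2)"
    unfolding T_def by (rule pair_bound[OF assms]) auto
  also have "\<dots> = 2 * (int (card V) * (\<Sum>u\<in>V. x u ^ 2)) - 2 * (\<Sum>u\<in>V. x u)^2"
    by (rule sq_sum[OF fV])
  finally have T: "T \<le> 2 * (int (card V) * (\<Sum>u\<in>V. x u ^ 2)) - 2 * (\<Sum>u\<in>V. x u)^2" .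
  have "(\<Sum>e\<in>E. \<Sum>u\<in>e. (1::int)) = (\<Sum>u\<in>V. x u)"
    using swap_count[OF assms, of "\<lambda>u. 1"] by (simp add: x_def)
  moreover have "(\<Sum>e\<in>E. \<Sum>u\<in>e. (1::int)) = 2 * int (card E)"
    using c2 by simp
  ultimately have m: "(\<Sum>u\<in>V. x u) = 2 * int (card E)" by simp
  have split: "(\<Sum>u\<in>V. x u ^ 3 - int (card V) * x u ^ 2)
     = (\<Sum>u\<in>V. x u ^ 3) - int (card V) * (\<Sum>u\<in>V. x u ^ 2)"
    by (simp add: sum_subtractf sum_distrib_left)
  have "2 * S \<ge> 4 * int (card E) ^ 2 + (\<Sum>u\<in>V. x u ^ 3 - int (card V) * x u ^ 2)"
  proof -
    have "(\<Sum>u\<in>V. x u)^2 = 4 * int (card E) ^ 2" using m by (simp add: power_mult_distrib)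
    then show ?thesis using S T split by linarith
  qed
  then show ?thesis by (simp add: S_def x_def)
qed

end
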